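(* Let $\alpha>-1$, let $\phi$ be an analytic self-map of $\mathbb{D}$ with $\phi(0)=0$, and let $\psi$ be analytic on $\mathbb{D}$ with a zero of order $m>0$ at the origin, such that $C_{\psi,\phi}$ is bounded on $L^2_a(dA_\alpha)$. Let $\hat\psi_m$ be the $m$-th Taylor coefficient of $\psi$ at $0$. Then $W(C_{\psi,\phi})$ contains the closed disc centred at the origin with radius $\dfrac{m!\,\Gamma(\alpha+2)}{\Gamma(m+\alpha+2)+m!\,\Gamma(\alpha+2)}|\hat\psi_m|$.
   Context: $\mathbb{D}$ is the open unit disc. $L^2_a(dA_\alpha)$ is the weighted Bergman space of analytic $f$ on $\mathbb{D}$ with $\int_{\mathbb{D}}|f|^2dA_\alpha<\infty$, $dA_{\alpha}(z)=(\alpha+1)(1-|z|^2)^{\alpha}dA(z)$, $dA$ normalized area measure. $C_{\psi,\phi}f=\psi\cdot(f\circ\phi)$. $W(T)=\{\langle Tf,f\rangle:\|f\|=1\}$. *)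

theory Defs
  imports "HOL-Complex_Analysis.Complex_Analysis"
begin

definition dA_alpha :: "real \<Rightarrow> complex measure" where
  "dA_alpha \<alpha> = density (restrict_space lborel (ball 0 1))
     (\<lambda>z. ennreal ((\<alpha> + 1) * (1 - (cmod z)\<^sup>2) powr \<alpha> / pi))"

definition bergman_space :: "real \<Rightarrow> (complex \<Rightarrow> complex) set" where
  "bergman_space \<alpha> = {f. f holomorphic_on ball 0 1 \<and>
       integrable (dA_alpha \<alpha>) (\<lambda>z. (cmod (f z))\<^sup>2)}"

definition bergman_inner :: "real \<Rightarrow> (complex \<Rightarrow> complex) \<Rightarrow> (complex \<Rightarrow> complex) \<Rightarrow> complex" where
  "bergman_inner \<alpha> f g = (\<integral>z. f z * cnj (g z) \<partial>(dA_alpha \<alpha>))"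

definition bergman_norm :: "real \<Rightarrow> (complex \<Rightarrow> complex) \<Rightarrow> real" where
  "bergman_norm \<alpha> f = sqrt (\<integral>z. (cmod (f z))\<^sup>2 \<partial>(dA_alpha \<alpha>))"

definition wcomp :: "(complex \<Rightarrow> complex) \<Rightarrow> (complex \<Rightarrow> complex) \<Rightarrow> (complex \<Rightarrow> complex) \<Rightarrow> (complex \<Rightarrow> complex)" where
  "wcomp \<psi> \<phi> f = (\<lambda>z. \<psi> z * f (\<phi> z))"

definition bounded_on_bergman :: "real \<Rightarrow> ((complex \<Rightarrow> complex) \<Rightarrow> (complex \<Rightarrow> complex)) \<Rightarrow> bool" where
  "bounded_on_bergman \<alpha> T \<longleftrightarrow>
     (\<forall>f \<in> bergman_space \<alpha>. T f \<in> bergman_space \<alpha>) \<and>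
     (\<exists>K. \<forall>f \<in> bergman_space \<alpha>. bergman_norm \<alpha> (T f) \<le> K * bergman_norm \<alpha> f)"

definition numerical_range :: "real \<Rightarrow> ((complex \<Rightarrow> complex) \<Rightarrow> (complex \<Rightarrow> complex)) \<Rightarrow> complex set" where
  "numerical_range \<alpha> T = {bergman_inner \<alpha> (T f) f | f. f \<in> bergman_space \<alpha> \<and> bergman_norm \<alpha> f = 1}"

end

theory Submission
  imports Defs
begin


lemma meas_Complex[measurable]:
  "(\<lambda>p. Complex (fst p) (snd p)) \<in> borel_measurable (lborel \<Otimes>\<^sub>M lborel)"
  by (subst borel_measurable_complex_iff) simp

lemma lborel_complex_coords:
  "distr (lborel \<Otimes>\<^sub>M lborel) borel (\<lambda>p. Complex (fst p) (snd p)) = (lborel :: complex measure)"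
proof (rule lborel_eqI[symmetric])
  fix l u :: complex
  assume le: "\<And>b. b \<in> Basis \<Longrightarrow> l \<bullet> b \<le> u \<bullet> b"
  have "Re l \<le> Re u" "Im l \<le> Im u" using le[of 1] le[of \<i>] by (auto simp: Basis_complex_def)
  have pre: "(\<lambda>p. Complex (fst p) (snd p)) -` box l u \<inter> space (lborel \<Otimes>\<^sub>M lborel)
      = {Re l<..<Re u} \<times> {Im l<..<Im u}"
    by (auto simp: box_def Basis_complex_def space_pair_measure)
  have "emeasure (distr (lborel \<Otimes>\<^sub>M lborel) borel (\<lambda>p. Complex (fst p) (snd p))) (box l u)
      = emeasure (lborel \<Otimes>\<^sub>M lborel) ({Re l<..<Re u} \<times> {Im l<..<Im u})"
    by (subst emeasure_distr) (auto simp: pre)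
  also have "\<dots> = ennreal (Re u - Re l) * ennreal (Im u - Im l)"
    using \<open>Re l \<le> Re u\<close> \<open>Im l \<le> Im u\<close>
    by (subst lborel.emeasure_pair_measure_Times) auto
  also have "\<dots> = (\<Prod>b\<in>Basis. (u - l) \<bullet> b)"
    using \<open>Re l \<le> Re u\<close> \<open>Im l \<le> Im u\<close>
    by (simp add: Basis_complex_def ennreal_mult)
  finally show "emeasure (distr (lborel \<Otimes>\<^sub>M lborel) borel (\<lambda>p. Complex (fst p) (snd p))) (box l u) = (\<Prod>b\<in>Basis. (u - l) \<bullet> b)" .
qed simp

abbreviation "PP \<equiv> (lborel \<Otimes>\<^sub>M lborel :: (real \<times> real) measure)"

lemma shear_x: "distr PP PP (\<lambda>p. (fst p + a * snd p, snd p)) = PP"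
proof (rule measure_eqI)
  fix A assume A: "A \<in> sets (distr PP PP (\<lambda>p. (fst p + a * snd p, snd p)))"
  hence A': "A \<in> sets PP" by simp
  have "emeasure (distr PP PP (\<lambda>p. (fst p + a * snd p, snd p))) A
      = (\<integral>\<^sup>+p. indicator A p \<partial>distr PP PP (\<lambda>p. (fst p + a * snd p, snd p)))"
    using A by (simp add: nn_integral_indicator)
  also have "\<dots> = (\<integral>\<^sup>+p. indicator A (fst p + a * snd p, snd p) \<partial>PP)"
    using A' by (subst nn_integral_distr) auto
  also have "\<dots> = (\<integral>\<^sup>+y. \<integral>\<^sup>+x. indicator A (x + a * y, y) \<partial>lborel \<partial>lborel)"
    using A' by (subst lborel_pair.nn_integral_snd[symmetric]) auto
  also have "\<dots> = (\<integral>\<^sup>+y. \<integral>\<^sup>+x. indicator A (x, y) \<partial>lborel \<partial>lborel)"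
  proof (rule nn_integral_cong)
    fix y :: real
    have m: "(\<lambda>x. indicator A (x, y) :: ennreal) \<in> borel_measurable borel"
      using A' by measurable
    show "(\<integral>\<^sup>+x. indicator A (x + a * y, y) \<partial>lborel) = (\<integral>\<^sup>+x. indicator A (x, y) \<partial>lborel)"
      using nn_integral_real_affine[OF m, of 1 "a*y"] by (simp add: add.commute)
  qed
  also have "\<dots> = emeasure PP A"
    using A' by (subst lborel_pair.nn_integral_snd) (auto simp: nn_integral_indicator)
  finally show "emeasure (distr PP PP (\<lambda>p. (fst p + a * snd p, snd p))) A = emeasure PP A" .
qed simp

lemma shear_y: "distr PP PP (\<lambda>p. (fst p, snd p + b * fst p)) = PP"
proof (rule measure_eqI)
  fix A assume A: "A \<in> sets (distr PP PP (\<lambda>p. (fst p, snd p + b * fst p)))"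
  hence A': "A \<in> sets PP" by simp
  have "emeasure (distr PP PP (\<lambda>p. (fst p, snd p + b * fst p))) A
      = (\<integral>\<^sup>+p. indicator A p \<partial>distr PP PP (\<lambda>p. (fst p, snd p + b * fst p)))"
    using A by (simp add: nn_integral_indicator)
  also have "\<dots> = (\<integral>\<^sup>+p. indicator A (fst p, snd p + b * fst p) \<partial>PP)"
    using A' by (subst nn_integral_distr) auto
  also have "\<dots> = (\<integral>\<^sup>+x. \<integral>\<^sup>+y. indicator A (x, y + b * x) \<partial>lborel \<partial>lborel)"
    using A' by (subst lborel.nn_integral_fst[symmetric]) auto
  also have "\<dots> = (\<integral>\<^sup>+x. \<integral>\<^sup>+y. indicator A (x, y) \<partial>lborel \<partial>lborel)"
  proof (rule nn_integral_cong)
    fix x :: real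
    have m: "(\<lambda>y. indicator A (x, y) :: ennreal) \<in> borel_measurable borel"
      using A' by measurable
    show "(\<integral>\<^sup>+y. indicator A (x, y + b * x) \<partial>lborel) = (\<integral>\<^sup>+y. indicator A (x, y) \<partial>lborel)"
      using nn_integral_real_affine[OF m, of 1 "b*x"] by (simp add: add.commute)
  qed
  also have "\<dots> = emeasure PP A"
    using A' by (subst lborel.nn_integral_fst) (auto simp: nn_integral_indicator)
  finally show "emeasure (distr PP PP (\<lambda>p. (fst p, snd p + b * fst p))) A = emeasure PP A" .
qed simp

lemma rot_PP:
  fixes c s :: real
  assumes cs: "c\<^sup>2 + s\<^sup>2 = 1" and c: "c \<noteq> -1"
  shows "distr PP PP (\<lambda>p. (c * fst p - s * snd p, s * fst p + c * snd p)) = PP"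
proof -
  define t where "t = s / (1 + c)"
  have c1: "1 + c \<noteq> 0" using c by linarith
  have e1: "1 - t * s = c" using cs c1 unfolding t_def by (simp add: field_simps power2_eq_square)
  have e2: "t * (1 + c) = s" using c1 unfolding t_def by simp
  let ?X = "\<lambda>p::real\<times>real. (fst p + (-t) * snd p, snd p)"
  let ?Y = "\<lambda>p::real\<times>real. (fst p, snd p + s * fst p)"
  have eq: "(\<lambda>p. (c * fst p - s * snd p, s * fst p + c * snd p)) = ?X \<circ> (?Y \<circ> ?X)"
  proof
    fix p :: "real \<times> real"
    obtain x y where p: "p = (x, y)" by (cases p)
    have "c * x - s * y = x - t * y + - t * (y + s * (x - t * y))"
    proof -
      have "x - t * y + - t * (y + s * (x - t * y)) = x * (1 - t * s) - y * (t * (1 + (1 - t * s)))"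
        by (simp add: algebra_simps)
      also have "\<dots> = x * c - y * s" by (simp only: e1 e2)
      finally show ?thesis by (simp add: mult.commute)
    qed
    moreover have "s * x + c * y = y + s * (x - t * y)"
    proof -
      have "y + s * (x - t * y) = s * x + y * (1 - t * s)" by (simp add: algebra_simps)
      also have "\<dots> = s * x + y * c" by (simp only: e1)
      finally show ?thesis by (simp add: mult.commute)
    qed
    ultimately show "(c * fst p - s * snd p, s * fst p + c * snd p) = (?X \<circ> (?Y \<circ> ?X)) p"
      by (simp add: p)
  qed
  have mX: "?X \<in> measurable PP PP" and mY: "?Y \<in> measurable PP PP" by measurable
  have "distr PP PP (?X \<circ> (?Y \<circ> ?X)) = distr (distr (distr PP PP ?X) PP ?Y) PP ?X"
    using mX mY by (simp add: distr_distr measurable_comp)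
  also have "\<dots> = PP" by (simp only: shear_x shear_y)
  finally show ?thesis by (simp only: eq)
qed

lemma rot_complex_lborel:
  fixes u :: complex
  assumes u: "norm u = 1"
  shows "distr lborel borel (\<lambda>z. u * z) = (lborel :: complex measure)"
proof (cases "u = -1")
  case True
  have "(lborel :: complex measure) = density (distr lborel borel (\<lambda>x. 0 + (-1) *\<^sub>R x)) (\<lambda>_. \<bar>-1::real\<bar> ^ DIM(complex))"
    by (rule lborel_affine) simp
  also have "\<dots> = distr lborel borel (\<lambda>z. u * z)"
    using True by (simp add: density_1)
  finally show ?thesis by simp
next
  case False
  define c where "c = Re u"
  define s where "s = Im u"
  have cs: "c\<^sup>2 + s\<^sup>2 = 1" using u unfolding c_def s_def
    by (metis cmod_power2 one_power2)
  have c: "c \<noteq> -1"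
  proof
    assume "c = -1"
    with cs have "s = 0" by simp
    with \<open>c = -1\<close> have "u = -1" unfolding c_def s_def by (simp add: complex_eq_iff)
    with False show False by simp
  qed
  let ?C = "\<lambda>p::real\<times>real. Complex (fst p) (snd p)"
  let ?R = "\<lambda>p::real\<times>real. (c * fst p - s * snd p, s * fst p + c * snd p)"
  have mR: "?R \<in> measurable PP PP" by measurable
  have eq: "(\<lambda>z. u * z) \<circ> ?C = ?C \<circ> ?R"
    by (auto simp: c_def s_def complex_eq_iff)
  have "distr lborel borel (\<lambda>z. u * z) = distr (distr PP borel ?C) borel (\<lambda>z. u * z)"
    by (simp add: lborel_complex_coords)
  also have "\<dots> = distr PP borel ((\<lambda>z. u * z) \<circ> ?C)"
    by (subst distr_distr) auto
  also have "\<dots> = distr PP borel (?C \<circ> ?R)" by (simp only: eq)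
  also have "\<dots> = distr (distr PP PP ?R) borel ?C"
    using mR by (subst distr_distr) auto
  also have "\<dots> = lborel" using rot_PP[OF cs c] lborel_complex_coords by simp
  finally show ?thesis .
qed



lemma emeasure_ball_complex: "r \<ge> 0 \<Longrightarrow> emeasure lborel (ball (c::complex) r) = ennreal (pi * r\<^sup>2)"
  by (simp add: emeasure_ball unit_ball_vol_2)

lemma emeasure_cball_complex: "r \<ge> 0 \<Longrightarrow> emeasure lborel (cball (c::complex) r) = ennreal (pi * r\<^sup>2)"
  by (simp add: emeasure_cball unit_ball_vol_2)

lemma radial_distr:
  "distr (restrict_space lborel (ball (0::complex) 1)) borel (\<lambda>z. (cmod z)\<^sup>2)
     = density lborel (\<lambda>s. ennreal pi * indicator {0..<1} s)"
proof (rule measure_eqI_lessThan)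
  let ?M = "restrict_space lborel (ball (0::complex) 1)"
  let ?N = "distr ?M borel (\<lambda>z. (cmod z)\<^sup>2)"
  have [measurable]: "(\<lambda>z. (cmod z)\<^sup>2) \<in> borel_measurable ?M"
    by (intro measurable_restrict_space1) measurable
  have e: "emeasure ?N {x<..} = emeasure lborel (ball 0 1 \<inter> {z. x < (cmod z)\<^sup>2})" for x
  proof -
    have "emeasure ?N {x<..} = emeasure ?M ((\<lambda>z. (cmod z)\<^sup>2) -` {x<..} \<inter> space ?M)"
      by (subst emeasure_distr) auto
    also have "\<dots> = emeasure lborel ((\<lambda>z. (cmod z)\<^sup>2) -` {x<..} \<inter> ball 0 1)"
      by (subst emeasure_restrict_space) (auto simp: space_restrict_space)
    finally show ?thesis by (simp add: Int_commute vimage_def)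
  qed
  show "emeasure ?N {x<..} < \<infinity>" for x
  proof -
    have "emeasure lborel (ball 0 1 \<inter> {z. x < (cmod z)\<^sup>2}) \<le> emeasure lborel (ball (0::complex) 1)"
      by (intro emeasure_mono) auto
    also have "\<dots> < \<infinity>" by (simp add: emeasure_ball_complex)
    finally show ?thesis by (simp add: e)
  qed
  show "emeasure ?N {x<..} = emeasure (density lborel (\<lambda>s. ennreal pi * indicator {0..<1} s)) {x<..}" for x
  proof -
    have rhs: "emeasure (density lborel (\<lambda>s. ennreal pi * indicator {0..<1} s)) {x<..}
        = ennreal pi * emeasure lborel ({0..<1} \<inter> {x<..})"
    proof -
      have "(\<lambda>xa. ennreal pi * indicator {0..<1} xa * indicator {x<..} xa) = (\<lambda>xa. ennreal pi * indicator ({0..<1} \<inter> {x<..}) xa)"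
        by (auto simp: indicator_def fun_eq_iff)
      then show ?thesis by (subst emeasure_density) (simp_all add: nn_integral_cmult_indicator)
    qed
    show ?thesis
    proof (cases "x < 0")
      case True
      have xl: "x < (cmod z)\<^sup>2" for z :: complex using True by (smt (verit) zero_le_power2)
      have "ball 0 1 \<inter> {z. x < (cmod z)\<^sup>2} = ball (0::complex) 1"
        using xl by auto
      moreover have "{0..<1} \<inter> {x<..} = {0..<(1::real)}" using True by auto
      ultimately show ?thesis
        by (simp add: e rhs emeasure_ball_complex)
    next
      case False
      show ?thesis
      proof (cases "x < 1")
        case True
        have sq: "norm z \<le> sqrt x \<longleftrightarrow> (cmod z)\<^sup>2 \<le> x" for z :: complex
        proof -
          have "sqrt ((cmod z)\<^sup>2) = cmod z" by simp
          thus ?thesis by (metis real_sqrt_le_iff)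
        qed
        have "ball 0 1 \<inter> {z. x < (cmod z)\<^sup>2} = ball (0::complex) 1 - cball 0 (sqrt x)"
          using sq by (auto simp: not_le)
        moreover have "{0..<1} \<inter> {x<..} = {x<..<(1::real)}" using False True by auto
        moreover have "emeasure lborel (ball (0::complex) 1 - cball 0 (sqrt x)) = ennreal (pi - pi * x)"
        proof -
          have s1: "sqrt x < 1" using True False by simp
          have "cball 0 (sqrt x) \<subseteq> ball (0::complex) 1"
          proof
            fix t :: complex assume "t \<in> cball 0 (sqrt x)"
            hence "cmod t \<le> sqrt x" by simp
            hence "cmod t < 1" using s1 by linarith
            thus "t \<in> ball 0 1" by simp
          qed
          hence "emeasure lborel (ball (0::complex) 1 - cball 0 (sqrt x)) = 
              emeasure lborel (ball (0::complex) 1) - emeasure lborel (cball (0::complex) (sqrt x))"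
            using False by (intro emeasure_Diff) (auto simp: emeasure_cball_complex)
          also have "emeasure lborel (ball (0::complex) 1) = ennreal pi"
            by (simp add: emeasure_ball_complex)
          also have "emeasure lborel (cball (0::complex) (sqrt x)) = ennreal (pi * x)"
            using False by (simp add: emeasure_cball_complex)
          also have "ennreal pi - ennreal (pi * x) = ennreal (pi - pi * x)"
            using False by (intro ennreal_minus) simp
          finally show ?thesis .
        qed
        moreover have "ennreal pi * ennreal (1 - x) = ennreal (pi - pi * x)"
          using True by (simp add: ennreal_mult[symmetric] right_diff_distrib)
        ultimately show ?thesis using True
          by (simp add: e rhs)
      next
        case False2: False
        have "ball 0 1 \<inter> {z. x < (cmod z)\<^sup>2} = ({}::complex set)"
        proof -
          have "\<not> x < (cmod z)\<^sup>2" if "cmod z < 1" for z :: complex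
          proof -
            have "(cmod z)\<^sup>2 < 1" using that by (simp add: abs_square_less_1)
            thus ?thesis using False2 by simp
          qed
          thus ?thesis by auto
        qed
        moreover have "{0..<1} \<inter> {x<..} = ({}::real set)" using False2 by auto
        ultimately show ?thesis by (simp add: e rhs)
      qed
    qed
  qed
qed simp_all



definition wfun :: "real \<Rightarrow> real \<Rightarrow> real" where
  "wfun \<alpha> s = (\<alpha> + 1) * (1 - s) powr \<alpha> / pi"

lemma dA_alpha_alt: "dA_alpha \<alpha> = density (restrict_space lborel (ball 0 1)) (\<lambda>z. ennreal (wfun \<alpha> ((cmod z)\<^sup>2)))"
  unfolding dA_alpha_def wfun_def ..

lemma sets_dA[simp, measurable_cong]: "sets (dA_alpha \<alpha>) = sets (restrict_space lborel (ball 0 1))"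
  unfolding dA_alpha_def by simp

lemma space_dA[simp]: "space (dA_alpha \<alpha>) = ball 0 1"
  unfolding dA_alpha_def by (simp add: space_restrict_space)

lemma radial_nn:
  assumes g[measurable]: "g \<in> borel_measurable borel"
  shows "(\<integral>\<^sup>+z. g ((cmod z)\<^sup>2) \<partial>dA_alpha \<alpha>)
     = (\<integral>\<^sup>+s. ennreal ((\<alpha> + 1) * (1 - s) powr \<alpha>) * indicator {0..<1} s * g s \<partial>lborel)"
proof -
  let ?R = "restrict_space lborel (ball (0::complex) 1)"
  have [measurable]: "(\<lambda>z. (cmod z)\<^sup>2) \<in> borel_measurable ?R"
    by (intro measurable_restrict_space1) measurable
  have [measurable]: "wfun \<alpha> \<in> borel_measurable borel" unfolding wfun_def by measurable
  have "(\<integral>\<^sup>+z. g ((cmod z)\<^sup>2) \<partial>dA_alpha \<alpha>) = (\<integral>\<^sup>+z. ennreal (wfun \<alpha> ((cmod z)\<^sup>2)) * g ((cmod z)\<^sup>2) \<partial>?R)"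
    unfolding dA_alpha_alt by (subst nn_integral_density) auto
  also have "\<dots> = (\<integral>\<^sup>+s. ennreal (wfun \<alpha> s) * g s \<partial>distr ?R borel (\<lambda>z. (cmod z)\<^sup>2))"
    by (subst nn_integral_distr) auto
  also have "\<dots> = (\<integral>\<^sup>+s. ennreal pi * indicator {0..<1} s * (ennreal (wfun \<alpha> s) * g s) \<partial>lborel)"
    unfolding radial_distr by (subst nn_integral_density) auto
  also have "\<dots> = (\<integral>\<^sup>+s. ennreal ((\<alpha> + 1) * (1 - s) powr \<alpha>) * indicator {0..<1} s * g s \<partial>lborel)"
  proof (rule nn_integral_cong)
    fix s :: real
    show "ennreal pi * indicator {0..<1} s * (ennreal (wfun \<alpha> s) * g s) =
          ennreal ((\<alpha> + 1) * (1 - s) powr \<alpha>) * indicator {0..<1} s * g s"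
    proof (cases "s \<in> {0..<1}")
      case True
      show ?thesis
      proof (cases "\<alpha> + 1 \<ge> 0")
        case True2: True
        have "ennreal pi * ennreal (wfun \<alpha> s) = ennreal ((\<alpha> + 1) * (1 - s) powr \<alpha>)"
          using True2 by (simp add: wfun_def ennreal_mult[symmetric])
        hence "ennreal pi * (ennreal (wfun \<alpha> s) * g s) = ennreal ((\<alpha> + 1) * (1 - s) powr \<alpha>) * g s"
          by (simp only: mult.assoc[symmetric])
        thus ?thesis using True by simp
      next
        case False
        hence "wfun \<alpha> s \<le> 0" "(\<alpha> + 1) * (1 - s) powr \<alpha> \<le> 0"
          by (auto simp: wfun_def mult_nonpos_nonneg divide_nonpos_pos)
        thus ?thesis by (simp add: ennreal_eq_0_iff ennreal_neg)
      qed
    qed simp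
  qed
  finally show ?thesis .
qed

definition wk :: "real \<Rightarrow> nat \<Rightarrow> real" where
  "wk \<alpha> k = fact k * Gamma (\<alpha> + 2) / Gamma (real k + \<alpha> + 2)"

lemma wk_pos: "\<alpha> > -1 \<Longrightarrow> wk \<alpha> k > 0"
  unfolding wk_def by (intro divide_pos_pos mult_pos_pos) auto

lemma wk_0: "\<alpha> > -1 \<Longrightarrow> wk \<alpha> 0 = 1"
proof -
  assume "\<alpha> > -1"
  hence "Gamma (\<alpha> + 2) > 0" by (intro Gamma_real_pos) simp
  thus ?thesis unfolding wk_def by (simp add: add_ac)
qed

lemma moment_nn:
  assumes a: "\<alpha> > -1"
  shows "(\<integral>\<^sup>+z. ennreal ((cmod z) ^ (2 * k)) \<partial>dA_alpha \<alpha>) = ennreal (wk \<alpha> k)"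
proof -
  have "(\<integral>\<^sup>+z. ennreal ((cmod z) ^ (2 * k)) \<partial>dA_alpha \<alpha>) = (\<integral>\<^sup>+z. ennreal (((cmod z)\<^sup>2) ^ k) \<partial>dA_alpha \<alpha>)"
    by (simp add: power_mult)
  also have "\<dots> = (\<integral>\<^sup>+s. ennreal ((\<alpha> + 1) * (1 - s) powr \<alpha>) * indicator {0..<1} s * ennreal (s ^ k) \<partial>lborel)"
    by (rule radial_nn[where g = "\<lambda>s. ennreal (s ^ k)"]) measurable
  also have "\<dots> = (\<integral>\<^sup>+s. ennreal ((\<alpha> + 1) * (s powr (real (k + 1) - 1) * (1 - s) powr (\<alpha> + 1 - 1))) * indicator {0..1} s \<partial>lborel)"
  proof (rule nn_integral_cong_AE)
    have "AE s in lborel. s \<noteq> 0" "AE s in lborel. s \<noteq> (1::real)" by (simp_all add: AE_lborel_singleton)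
    then show "AE s in lborel. ennreal ((\<alpha> + 1) * (1 - s) powr \<alpha>) * indicator {0..<1} s * ennreal (s ^ k) =
        ennreal ((\<alpha> + 1) * (s powr (real (k + 1) - 1) * (1 - s) powr (\<alpha> + 1 - 1))) * indicator {0..1} s"
    proof eventually_elim
      case (elim s)
      show ?case
      proof (cases "s \<in> {0<..<1}")
        case True
        hence "s ^ k = s powr (real (k + 1) - 1)" by (simp add: powr_realpow)
        thus ?thesis using True a by (simp add: ennreal_mult[symmetric] mult_ac)
      next
        case False
        with elim have "s \<notin> {0..<1}" "s \<notin> {0..1}" by auto
        thus ?thesis by simp
      qed
    qed
  qed
  also have "\<dots> = ennreal ((\<alpha> + 1) * Beta (real (k + 1)) (\<alpha> + 1))"
  proof (rule nn_integral_has_integral_lebesgue')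
    show "0 \<le> (\<alpha> + 1) * (x powr (real (k + 1) - 1) * (1 - x) powr (\<alpha> + 1 - 1))" if "x \<in> {0..1}" for x
      using a by simp
    show "((\<lambda>x. (\<alpha> + 1) * (x powr (real (k + 1) - 1) * (1 - x) powr (\<alpha> + 1 - 1))) has_integral
        (\<alpha> + 1) * Beta (real (k + 1)) (\<alpha> + 1)) {0..1}"
      using a by (intro has_integral_mult_right has_integral_Beta_real) auto
  qed
  also have "(\<alpha> + 1) * Beta (real (k + 1)) (\<alpha> + 1) = wk \<alpha> k"
  proof -
    have ni: "\<alpha> + 1 \<notin> \<int>\<^sub>\<le>\<^sub>0" using a nonpos_Ints_nonpos by fastforce
    have g1: "Gamma (\<alpha> + 2) = (\<alpha> + 1) * Gamma (\<alpha> + 1)"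
      using Gamma_plus1[OF ni] by (simp add: add_ac)
    have g2: "Gamma (real (k + 1)) = fact k" using Gamma_fact[of k] by (simp add: add_ac)
    have g3: "real (k + 1) + (\<alpha> + 1) = real k + \<alpha> + 2" by simp
    show ?thesis unfolding wk_def Beta_def g3 g2 g1 by simp
  qed
  finally show ?thesis .
qed



abbreviation "RB \<equiv> restrict_space lborel (ball (0::complex) 1)"

lemma meas_mult_RB: "(\<lambda>z. u * z) \<in> measurable RB RB" if "norm u = 1"
proof (rule measurable_restrict_space2)
  show "(\<lambda>z. u * z) \<in> space RB \<rightarrow> ball 0 1" using that by (auto simp: space_restrict_space norm_mult)
  show "(\<lambda>z. u * z) \<in> measurable RB lborel"
    by (intro measurable_restrict_space1) simp
qed

lemma rot_RB:
  assumes u: "norm u = 1"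
  shows "distr RB RB (\<lambda>z. u * z) = RB"
proof (rule measure_eqI)
  fix A assume "A \<in> sets (distr RB RB (\<lambda>z. u * z))"
  hence A: "A \<subseteq> ball 0 1" "A \<in> sets borel" by (auto simp: sets_restrict_space_iff)
  have pre: "(\<lambda>z. u * z) -` A \<inter> space RB = (\<lambda>z. u * z) -` A"
    using A u by (auto simp: space_restrict_space norm_mult)
  have "emeasure (distr RB RB (\<lambda>z. u * z)) A = emeasure RB ((\<lambda>z. u * z) -` A \<inter> space RB)"
    using A u meas_mult_RB[OF u] by (subst emeasure_distr) (auto simp: sets_restrict_space_iff)
  also have "\<dots> = emeasure lborel ((\<lambda>z. u * z) -` A)"
    unfolding pre using A u by (subst emeasure_restrict_space) (auto simp: norm_mult)
  also have "\<dots> = emeasure (distr lborel borel (\<lambda>z. u * z)) A"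
    using A by (subst emeasure_distr) auto
  also have "\<dots> = emeasure lborel A" by (simp only: rot_complex_lborel[OF u])
  also have "\<dots> = emeasure RB A" using A by (subst emeasure_restrict_space) auto
  finally show "emeasure (distr RB RB (\<lambda>z. u * z)) A = emeasure RB A" .
qed simp

lemma dA_RB: "dA_alpha \<alpha> = density RB (\<lambda>z. ennreal (wfun \<alpha> ((cmod z)\<^sup>2)))"
  by (rule dA_alpha_alt)

lemma rot_dA:
  assumes u: "norm u = 1"
  shows "distr (dA_alpha \<alpha>) RB (\<lambda>z. u * z) = dA_alpha \<alpha>"
proof -
  have [measurable]: "(\<lambda>z. ennreal (wfun \<alpha> ((cmod z)\<^sup>2))) \<in> borel_measurable RB"
    unfolding wfun_def by (intro measurable_restrict_space1) measurable
  have "distr (dA_alpha \<alpha>) RB (\<lambda>z. u * z) = distr (density RB (\<lambda>z. ennreal (wfun \<alpha> ((cmod (u * z))\<^sup>2)))) RB (\<lambda>z. u * z)"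
    unfolding dA_RB using u by (simp add: norm_mult)
  also have "\<dots> = density (distr RB RB (\<lambda>z. u * z)) (\<lambda>z. ennreal (wfun \<alpha> ((cmod z)\<^sup>2)))"
    using u meas_mult_RB[OF u] by (subst density_distr) auto
  also have "\<dots> = dA_alpha \<alpha>" unfolding rot_RB[OF u] dA_RB ..
  finally show ?thesis .
qed

lemma meas_mult_dA: "norm u = 1 \<Longrightarrow> (\<lambda>z. u * z) \<in> measurable (dA_alpha \<alpha>) RB"
proof -
  assume u: "norm u = 1"
  have "measurable (dA_alpha \<alpha>) RB = measurable RB RB" by (rule measurable_cong_sets) simp_all
  thus ?thesis using meas_mult_RB[OF u] by simp
qed

lemma integral_rot_dA:
  fixes f :: "complex \<Rightarrow> 'b::{banach, second_countable_topology}"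
  assumes u: "norm u = 1" and f: "f \<in> borel_measurable RB"
  shows "(\<integral>z. f (u * z) \<partial>dA_alpha \<alpha>) = (\<integral>z. f z \<partial>dA_alpha \<alpha>)"
    and "integrable (dA_alpha \<alpha>) (\<lambda>z. f (u * z)) \<longleftrightarrow> integrable (dA_alpha \<alpha>) f"
proof -
  have m: "(\<lambda>z. u * z) \<in> measurable (dA_alpha \<alpha>) RB" using u by (rule meas_mult_dA)
  show "(\<integral>z. f (u * z) \<partial>dA_alpha \<alpha>) = (\<integral>z. f z \<partial>dA_alpha \<alpha>)"
    using integral_distr[OF m f] rot_dA[OF u] by simp
  show "integrable (dA_alpha \<alpha>) (\<lambda>z. f (u * z)) \<longleftrightarrow> integrable (dA_alpha \<alpha>) f"
    using integrable_distr_eq[OF m f] rot_dA[OF u] by simp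
qed

lemma nn_integral_rot_dA:
  assumes u: "norm u = 1" and f: "f \<in> borel_measurable RB"
  shows "(\<integral>\<^sup>+z. f (u * z) \<partial>dA_alpha \<alpha>) = (\<integral>\<^sup>+z. f z \<partial>dA_alpha \<alpha>)"
proof -
  have m: "(\<lambda>z. u * z) \<in> measurable (dA_alpha \<alpha>) RB" using u by (rule meas_mult_dA)
  have f': "f \<in> borel_measurable (distr (dA_alpha \<alpha>) RB (\<lambda>z. u * z))" using f by simp
  show ?thesis using nn_integral_distr[OF m f'] rot_dA[OF u] by simp
qed



definition ee :: "real \<Rightarrow> complex" where "ee t = exp (2 * of_real pi * \<i> * of_real t)"

lemma norm_ee[simp]: "norm (ee t) = 1"
  unfolding ee_def by (simp add: norm_exp_eq_Re)

lemma cnj_ee: "cnj (ee t) = inverse (ee t)"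
  unfolding ee_def by (simp add: exp_cnj exp_minus[symmetric] flip: exp_of_real)

lemma continuous_ee[continuous_intros]: "continuous_on S ee"
  unfolding ee_def by (intro continuous_intros)

lemma cauchy_circle_real:
  assumes h: "h holomorphic_on ball 0 1" and r: "0 < r" "r < 1"
  shows "((\<lambda>t. h (of_real r * ee t) * cnj (ee t) ^ k) has_integral ((deriv ^^ k) h 0 / fact k * of_real r ^ k)) {0..1}"
proof -
  have cb: "cball 0 r \<subseteq> ball (0::complex) 1" using r by auto
  have contf: "continuous_on (cball 0 r) h"
    using holomorphic_on_imp_continuous_on[OF h] cb continuous_on_subset by blast
  have holf: "h holomorphic_on ball 0 r"
    using h by (rule holomorphic_on_subset) (use r in auto)
  have "((\<lambda>u. h u / (u - 0) ^ Suc k) has_contour_integral (2 * pi * \<i> / fact k * (deriv ^^ k) h 0)) (circlepath 0 r)"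
    by (rule Cauchy_has_contour_integral_higher_derivative_circlepath[OF contf holf]) (use r in simp)
  hence I: "((\<lambda>t. h (of_real r * ee t) / (of_real r * ee t) ^ Suc k * (2 * pi * \<i> * r * ee t))
      has_integral (2 * pi * \<i> / fact k * (deriv ^^ k) h 0)) {0..1}"
    unfolding has_contour_integral vector_derivative_circlepath by (simp add: circlepath ee_def)
  have I2: "((\<lambda>t. (of_real r ^ k / (2 * pi * \<i>)) * (h (of_real r * ee t) / (of_real r * ee t) ^ Suc k * (2 * pi * \<i> * r * ee t)))
      has_integral ((of_real r ^ k / (2 * pi * \<i>)) * (2 * pi * \<i> / fact k * (deriv ^^ k) h 0))) {0..1}"
    by (rule has_integral_mult_right[OF I])
  have eq1: "(of_real r ^ k / (2 * pi * \<i>)) * (h (of_real r * ee t) / (of_real r * ee t) ^ Suc k * (2 * pi * \<i> * r * ee t))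
      = h (of_real r * ee t) * cnj (ee t) ^ k" for t
  proof -
    have ne: "ee t \<noteq> 0" unfolding ee_def by simp
    have rn: "(of_real r :: complex) \<noteq> 0" using r by simp
    show ?thesis using ne rn unfolding cnj_ee
      by (simp add: field_simps power_inverse)
  qed
  have eq2: "(of_real r ^ k / (2 * pi * \<i>)) * (2 * pi * \<i> / fact k * (deriv ^^ k) h 0) = (deriv ^^ k) h 0 / fact k * of_real r ^ k"
    by (simp add: field_simps)
  show ?thesis using I2 unfolding eq1 eq2 .
qed

lemma cauchy_circle:
  assumes h: "h holomorphic_on ball 0 1" and z: "z \<noteq> 0" "cmod z < 1"
  shows "((\<lambda>t. h (ee t * z) * cnj (ee t) ^ k) has_integral ((deriv ^^ k) h 0 / fact k * z ^ k)) {0..1}"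
proof -
  define r where "r = cmod z"
  define u where "u = z / of_real r"
  have r: "0 < r" "r < 1" using z unfolding r_def by auto
  have u: "norm u = 1" using r unfolding u_def r_def by (simp add: norm_divide)
  have zu: "z = u * of_real r" unfolding u_def using r by simp
  have inb: "u * w \<in> ball 0 1" if "w \<in> ball 0 1" for w
    using that u by (simp add: norm_mult)
  have hu: "(\<lambda>w. h (u * w)) holomorphic_on ball 0 1"
    by (rule holomorphic_on_compose_gen[OF _ h, unfolded o_def]) (auto intro!: holomorphic_intros inb)
  have D: "(deriv ^^ k) (\<lambda>w. h (u * w)) 0 = u ^ k * (deriv ^^ k) h 0"
  proof -
    have "(deriv ^^ k) (\<lambda>w. h (u * w)) 0 = u ^ k * (deriv ^^ k) h (u * 0)"
      by (rule higher_deriv_compose_linear[OF h, where S="ball 0 1"]) (use inb in auto)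
    thus ?thesis by simp
  qed
  have "((\<lambda>t. h (u * (of_real r * ee t)) * cnj (ee t) ^ k) has_integral
      ((deriv ^^ k) (\<lambda>w. h (u * w)) 0 / fact k * of_real r ^ k)) {0..1}"
    using cauchy_circle_real[OF hu r, of k] by simp
  moreover have "(deriv ^^ k) (\<lambda>w. h (u * w)) 0 / fact k * of_real r ^ k = (deriv ^^ k) h 0 / fact k * z ^ k"
    unfolding D zu by (simp add: power_mult_distrib)
  moreover have "u * (of_real r * ee t) = ee t * z" for t unfolding zu by (simp add: mult_ac)
  ultimately show ?thesis by simp
qed



lemma meas_RB_cont: "continuous_on (ball 0 1) f \<Longrightarrow> f \<in> borel_measurable RB"
proof -
  assume c: "continuous_on (ball 0 1) f"
  have "borel_measurable RB = borel_measurable (restrict_space borel (ball (0::complex) 1))"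
    by (rule measurable_cong_sets) (simp_all add: sets_restrict_space)
  thus ?thesis using borel_measurable_continuous_on_restrict[OF c] by simp
qed

lemma meas_dA_cont: "continuous_on (ball 0 1) f \<Longrightarrow> f \<in> borel_measurable (dA_alpha \<alpha>)"
proof -
  assume c: "continuous_on (ball 0 1) f"
  have "borel_measurable (dA_alpha \<alpha>) = borel_measurable RB"
    by (rule measurable_cong_sets) simp_all
  thus ?thesis using meas_RB_cont[OF c] by simp
qed

lemma emeasure_dA_space: "\<alpha> > -1 \<Longrightarrow> emeasure (dA_alpha \<alpha>) (space (dA_alpha \<alpha>)) = 1"
proof -
  assume a: "\<alpha> > -1"
  have "emeasure (dA_alpha \<alpha>) (space (dA_alpha \<alpha>)) = (\<integral>\<^sup>+z. ennreal ((cmod z) ^ (2 * 0)) \<partial>dA_alpha \<alpha>)"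
    by (simp add: nn_integral_const)
  also have "\<dots> = 1" using moment_nn[OF a, of 0] wk_0[OF a] by simp
  finally show ?thesis .
qed

lemma fin_dA: "\<alpha> > -1 \<Longrightarrow> finite_measure (dA_alpha \<alpha>)"
proof -
  assume a: "\<alpha> > -1"
  have "emeasure (dA_alpha \<alpha>) (space (dA_alpha \<alpha>)) = 1" by (rule emeasure_dA_space[OF a])
  thus ?thesis by (intro finite_measureI) simp
qed

lemma moment_integral:
  assumes a: "\<alpha> > -1"
  shows "integrable (dA_alpha \<alpha>) (\<lambda>z. (cmod z) ^ (2 * k))"
    and "(\<integral>z. (cmod z) ^ (2 * k) \<partial>dA_alpha \<alpha>) = wk \<alpha> k"
proof -
  have m: "(\<lambda>z. (cmod z) ^ (2 * k)) \<in> borel_measurable (dA_alpha \<alpha>)"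
    by (intro meas_dA_cont continuous_intros)
  show "integrable (dA_alpha \<alpha>) (\<lambda>z. (cmod z) ^ (2 * k))"
    using m moment_nn[OF a, of k] by (intro integrableI_nonneg) auto
  show "(\<integral>z. (cmod z) ^ (2 * k) \<partial>dA_alpha \<alpha>) = wk \<alpha> k"
    using m moment_nn[OF a, of k] wk_pos[OF a, of k] by (subst integral_eq_nn_integral) auto
qed

lemma ee_meas[measurable]: "ee \<in> borel_measurable borel"
  by (intro borel_measurable_continuous_onI continuous_ee)

lemma coeff_integral:
  assumes a: "\<alpha> > -1" and h: "h holomorphic_on ball 0 1"
    and int: "integrable (dA_alpha \<alpha>) (\<lambda>z. h z * cnj (z ^ k))"
  shows "(\<integral>z. h z * cnj (z ^ k) \<partial>dA_alpha \<alpha>) = (deriv ^^ k) h 0 / fact k * wk \<alpha> k"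
proof -
  let ?dA = "dA_alpha \<alpha>"
  define F where "F z = h z * cnj (z ^ k)" for z
  define c where "c = (deriv ^^ k) h 0 / fact k"
  have hc: "continuous_on (ball 0 1) h" using h by (rule holomorphic_on_imp_continuous_on)
  have Fc: "continuous_on (ball 0 1) F" unfolding F_def by (intro continuous_intros hc)
  have FRB: "F \<in> borel_measurable RB" by (rule meas_RB_cont[OF Fc])
  have nFRB: "(\<lambda>z. norm (F z)) \<in> borel_measurable RB" using FRB by measurable
  interpret dA: finite_measure ?dA by (rule fin_dA[OF a])
  interpret P: pair_sigma_finite lborel ?dA
    by (intro pair_sigma_finite.intro sigma_finite_lborel dA.sigma_finite_measure_axioms)
  define \<Phi> where "\<Phi> t z = indicator {0..1} t *\<^sub>R F (ee t * z)" for t z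
  have g: "(\<lambda>p. ee (fst p) * snd p) \<in> measurable (lborel \<Otimes>\<^sub>M ?dA) RB"
  proof (rule measurable_restrict_space2)
    show "(\<lambda>p. ee (fst p) * snd p) \<in> space (lborel \<Otimes>\<^sub>M ?dA) \<rightarrow> ball 0 1"
      by (auto simp: space_pair_measure norm_mult)
    have s: "snd \<in> measurable (lborel \<Otimes>\<^sub>M ?dA) ?dA" by (rule measurable_snd)
    have i: "(\<lambda>z. z) \<in> borel_measurable ?dA" by (intro meas_dA_cont continuous_intros)
    have s2: "(\<lambda>p. snd p) \<in> borel_measurable (lborel \<Otimes>\<^sub>M ?dA)"
      using measurable_compose[OF s i] by simp
    have "(\<lambda>p. ee (fst p) * snd p) \<in> borel_measurable (lborel \<Otimes>\<^sub>M ?dA)"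
      using s2 by measurable
    thus "(\<lambda>p. ee (fst p) * snd p) \<in> measurable (lborel \<Otimes>\<^sub>M ?dA) lborel" by simp
  qed
  have \<Phi>m: "(\<lambda>p. \<Phi> (fst p) (snd p)) \<in> borel_measurable (lborel \<Otimes>\<^sub>M ?dA)"
  proof -
    have "(\<lambda>p. F (ee (fst p) * snd p)) \<in> borel_measurable (lborel \<Otimes>\<^sub>M ?dA)"
      using measurable_compose[OF g FRB] by simp
    thus ?thesis unfolding \<Phi>_def by measurable
  qed
  have rotF: "(\<integral>z. F (ee t * z) \<partial>?dA) = (\<integral>z. F z \<partial>?dA)" for t
    using integral_rot_dA(1)[OF norm_ee FRB] .
  have rotFn: "(\<integral>z. norm (F (ee t * z)) \<partial>?dA) = (\<integral>z. norm (F z) \<partial>?dA)" for t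
    using integral_rot_dA(1)[OF norm_ee nFRB] .
  have intF: "integrable ?dA F" using int unfolding F_def .
  have intFt: "integrable ?dA (\<lambda>z. F (ee t * z))" for t
    using integral_rot_dA(2)[OF norm_ee FRB] intF by simp
  have int\<Phi>: "integrable (lborel \<Otimes>\<^sub>M ?dA) (case_prod \<Phi>)"
  proof (rule P.Fubini_integrable)
    show "case_prod \<Phi> \<in> borel_measurable (lborel \<Otimes>\<^sub>M ?dA)"
      using \<Phi>m by (simp add: case_prod_beta')
    have "(\<lambda>t. \<integral>z. norm (case_prod \<Phi> (t, z)) \<partial>?dA) = (\<lambda>t. indicator {0..1::real} t *\<^sub>R (\<integral>z. norm (F z) \<partial>?dA))"
      by (auto simp: \<Phi>_def rotFn indicator_def fun_eq_iff)
    moreover have "integrable lborel (\<lambda>t. indicator {0..1::real} t *\<^sub>R (\<integral>z. norm (F z) \<partial>?dA))"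
      by (intro borel_integrable_compact compact_Icc continuous_intros)
    ultimately show "integrable lborel (\<lambda>t. \<integral>z. norm (case_prod \<Phi> (t, z)) \<partial>?dA)" by simp
    show "AE t in lborel. integrable ?dA (\<lambda>z. case_prod \<Phi> (t, z))"
      by (auto simp: \<Phi>_def intro!: integrable_scaleR_right intFt)
  qed
  have lhs: "(\<integral>t. (\<integral>z. \<Phi> t z \<partial>?dA) \<partial>lborel) = (\<integral>z. F z \<partial>?dA)"
  proof -
    have "(\<integral>t. (\<integral>z. \<Phi> t z \<partial>?dA) \<partial>lborel) = (\<integral>t. indicator {0..1::real} t *\<^sub>R (\<integral>z. F z \<partial>?dA) \<partial>lborel)"
      by (simp add: \<Phi>_def rotF)
    also have "\<dots> = measure lborel {0..1::real} *\<^sub>R (\<integral>z. F z \<partial>?dA)"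
    proof -
      have "integrable lborel (indicator {0..1::real} :: real \<Rightarrow> real)"
        by (rule integrable_real_indicator) auto
      thus ?thesis by (subst integral_scaleR_left) auto
    qed
    also have "\<dots> = (\<integral>z. F z \<partial>?dA)" by simp
    finally show ?thesis .
  qed
  have inner: "(\<integral>t. \<Phi> t z \<partial>lborel) = c * of_real ((cmod z) ^ (2 * k))" if z: "z \<in> ball 0 1" for z
  proof (cases "z = 0")
    case True
    show ?thesis
    proof (cases "k = 0")
      case True
      with \<open>z = 0\<close> show ?thesis by (simp add: \<Phi>_def F_def c_def)
    next
      case False
      with \<open>z = 0\<close> show ?thesis by (simp add: \<Phi>_def F_def c_def zero_power)
    qed
  next
    case False
    have ci: "((\<lambda>t. h (ee t * z) * cnj (ee t) ^ k) has_integral (c * z ^ k)) {0..1}"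
      using cauchy_circle[OF h False, of k] z unfolding c_def by simp
    have cont: "continuous_on {0..1} (\<lambda>t. h (ee t * z) * cnj (ee t) ^ k)"
    proof -
      have "continuous_on {0..1} (\<lambda>t. ee t * z)" by (intro continuous_intros)
      moreover have "(\<lambda>t. ee t * z) ` {0..1} \<subseteq> ball 0 1" using z by (auto simp: norm_mult)
      ultimately have "continuous_on {0..1} (\<lambda>t. h (ee t * z))"
        using continuous_on_compose2[OF hc] by blast
      thus ?thesis by (intro continuous_intros)
    qed
    have si: "set_integrable lborel {0..1} (\<lambda>t. h (ee t * z) * cnj (ee t) ^ k)"
      unfolding set_integrable_def by (rule borel_integrable_compact[OF compact_Icc cont])
    have "(\<integral>t. indicator {0..1} t *\<^sub>R (h (ee t * z) * cnj (ee t) ^ k) \<partial>lborel) = c * z ^ k"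
      using set_borel_integral_eq_integral(2)[OF si] integral_unique[OF ci]
      by (simp add: set_lebesgue_integral_def)
    moreover have "(\<lambda>t. \<Phi> t z) = (\<lambda>t. cnj (z ^ k) * (indicator {0..1} t *\<^sub>R (h (ee t * z) * cnj (ee t) ^ k)))"
      by (simp add: \<Phi>_def F_def power_mult_distrib mult_ac fun_eq_iff)
    ultimately have "(\<integral>t. \<Phi> t z \<partial>lborel) = cnj (z ^ k) * (c * z ^ k)"
      by (simp only: integral_mult_right_zero)
    also have "\<dots> = c * (z ^ k * cnj (z ^ k))" by (simp add: mult_ac)
    also have "z ^ k * cnj (z ^ k) = of_real ((cmod (z ^ k))\<^sup>2)"
      using complex_norm_square[of "z ^ k"] by simp
    also have "(cmod (z ^ k))\<^sup>2 = (cmod z) ^ (2 * k)"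
      by (simp add: norm_power power_mult[symmetric] mult.commute)
    finally show ?thesis .
  qed
  have rhs: "(\<integral>z. (\<integral>t. \<Phi> t z \<partial>lborel) \<partial>?dA) = c * of_real (wk \<alpha> k)"
  proof -
    have "(\<integral>z. (\<integral>t. \<Phi> t z \<partial>lborel) \<partial>?dA) = (\<integral>z. c * of_real ((cmod z) ^ (2 * k)) \<partial>?dA)"
      by (rule Bochner_Integration.integral_cong) (auto simp: inner)
    also have "\<dots> = c * of_real (wk \<alpha> k)"
      by (simp only: integral_mult_right_zero integral_complex_of_real moment_integral(2)[OF a])
    finally show ?thesis .
  qed
  have "(\<integral>z. F z \<partial>?dA) = c * of_real (wk \<alpha> k)"
    using P.Fubini_integral[OF int\<Phi>] lhs rhs by simp
  thus ?thesis unfolding F_def c_def by simp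
qed



lemma int_mult_bdd:
  assumes a: "\<alpha> > -1" and gc: "continuous_on (ball 0 1) g"
    and gi: "integrable (dA_alpha \<alpha>) (\<lambda>z. (cmod (g z))\<^sup>2)"
    and bc: "continuous_on (ball 0 1) b" and bb: "\<And>z. z \<in> ball 0 1 \<Longrightarrow> cmod (b z) \<le> 1"
  shows "integrable (dA_alpha \<alpha>) (\<lambda>z. g z * b z)"
proof (rule Bochner_Integration.integrable_bound[OF _ _ AE_I2])
  interpret dA: finite_measure "dA_alpha \<alpha>" by (rule fin_dA[OF a])
  show "integrable (dA_alpha \<alpha>) (\<lambda>z. 1 + (cmod (g z))\<^sup>2)"
    by (intro Bochner_Integration.integrable_add gi) simp
  show "(\<lambda>z. g z * b z) \<in> borel_measurable (dA_alpha \<alpha>)"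
    by (intro meas_dA_cont continuous_intros gc bc)
  fix z assume z: "z \<in> space (dA_alpha \<alpha>)"
  have "cmod (g z * b z) \<le> cmod (g z)"
    using bb[of z] z by (simp add: norm_mult mult_left_le)
  also have "\<dots> \<le> 1 + (cmod (g z))\<^sup>2"
  proof -
    have "0 \<le> (cmod (g z) - 1)\<^sup>2" by simp
    hence "2 * cmod (g z) \<le> 1 + (cmod (g z))\<^sup>2" by (simp add: power2_diff)
    thus ?thesis using norm_ge_zero[of "g z"] by linarith
  qed
  finally show "norm (g z * b z) \<le> norm (1 + (cmod (g z))\<^sup>2)" by simp
qed

lemma const_in_bergman: "\<alpha> > -1 \<Longrightarrow> (\<lambda>z. c) \<in> bergman_space \<alpha>"
proof -
  assume a: "\<alpha> > -1"
  interpret dA: finite_measure "dA_alpha \<alpha>" by (rule fin_dA[OF a])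
  show ?thesis unfolding bergman_space_def by simp
qed

lemma power_in_bergman: "\<alpha> > -1 \<Longrightarrow> (\<lambda>z. z ^ m) \<in> bergman_space \<alpha>"
proof -
  assume a: "\<alpha> > -1"
  have "(\<lambda>z. (cmod (z ^ m))\<^sup>2) = (\<lambda>z. (cmod z) ^ (2 * m))"
    by (simp add: norm_power power_mult[symmetric] mult.commute)
  thus ?thesis unfolding bergman_space_def using moment_integral(1)[OF a, of m]
    by (auto intro!: holomorphic_intros)
qed

lemma four_terms:
  fixes c1 c2 c3 c4 :: complex
  assumes "has_bochner_integral M f1 I1" "has_bochner_integral M f2 I2"
    "has_bochner_integral M f3 I3" "has_bochner_integral M f4 I4"
  shows "has_bochner_integral M (\<lambda>z. c1 * f1 z + c2 * f2 z + c3 * f3 z + c4 * f4 z)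
           (c1 * I1 + c2 * I2 + c3 * I3 + c4 * I4)"
  using assms by (intro has_bochner_integral_add has_bochner_integral_mult_right)

lemma cnj_pow_bdd: "z \<in> ball 0 1 \<Longrightarrow> cmod (cnj (z ^ k)) \<le> 1"
  by (simp add: norm_power power_le_one)

lemma radius_eq:
  assumes a: "\<alpha> > -1"
  shows "fact m * Gamma (\<alpha> + 2) / (Gamma (real m + \<alpha> + 2) + fact m * Gamma (\<alpha> + 2))
       = wk \<alpha> m / (1 + wk \<alpha> m)"
proof -
  have g: "Gamma (real m + \<alpha> + 2) > 0" using a by (intro Gamma_real_pos) simp
  show ?thesis unfolding wk_def using g by (simp add: field_simps)
qed

lemma scalar_choice:
  fixes w L B :: real
  assumes w: "w > 0" and B: "B > 0" and L: "0 \<le> L" "L \<le> w / (1 + w) * B"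
  obtains s where "s > 0" "s + L\<^sup>2 / (B\<^sup>2 * w * s) = 1"
proof -
  define v where "v = L / (w * B)"
  have v0: "v \<ge> 0" using L w B unfolding v_def by simp
  have v1: "v \<le> 1 / (1 + w)"
  proof -
    have "v = L / (w * B)" by (simp add: v_def)
    also have "\<dots> \<le> (w / (1 + w) * B) / (w * B)" using L w B by (intro divide_right_mono) auto
    also have "\<dots> = 1 / (1 + w)"
    proof -
      have "1 + w \<noteq> 0" "w \<noteq> 0" "B \<noteq> 0" "B * w + B * (w * w) \<noteq> 0"
      proof -
        have h1: "B * w > 0" using w B by simp
        have h2: "B * (w * w) > 0" using w B by simp
        show "1 + w \<noteq> 0" "w \<noteq> 0" "B \<noteq> 0" using w B by auto
        show "B * w + B * (w * w) \<noteq> 0" using h1 h2 by linarith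
      qed
      thus ?thesis by (simp add: field_simps)
    qed
    finally show ?thesis .
  qed
  have "4 * w * v\<^sup>2 \<le> 4 * w * (1 / (1 + w))\<^sup>2"
    using v0 v1 w by (intro mult_left_mono power_mono) auto
  also have "\<dots> \<le> 1"
  proof -
    have "0 \<le> (1 - w)\<^sup>2" by simp
    hence "4 * w \<le> (1 + w)\<^sup>2" by (simp add: power2_eq_square algebra_simps)
    thus ?thesis using w by (simp add: field_simps power2_eq_square)
  qed
  finally have D0: "0 \<le> 1 - 4 * w * v\<^sup>2" by simp
  define D where "D = 1 - 4 * w * v\<^sup>2"
  define s where "s = (1 + sqrt D) / 2"
  have s0: "s > 0" unfolding s_def using D0 by (simp add: D_def add_pos_nonneg)
  have sq: "(sqrt D)\<^sup>2 = D" using D0 unfolding D_def by simp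
  have "s * s - s + w * v\<^sup>2 = 0"
    unfolding s_def using sq unfolding D_def by (simp add: field_simps power2_eq_square)
  hence "s + w * v\<^sup>2 / s = 1" using s0 by (simp add: field_simps power2_eq_square)
  moreover have "w * v\<^sup>2 = L\<^sup>2 / (B\<^sup>2 * w)" unfolding v_def using w B by (simp add: field_simps power2_eq_square)
  ultimately have "s + L\<^sup>2 / (B\<^sup>2 * w * s) = 1" by (simp add: field_simps)
  thus ?thesis using s0 that by blast
qed

theorem theorem5p1:
  fixes \<alpha> :: real and \<phi> \<psi> :: "complex \<Rightarrow> complex" and m :: nat
  assumes "\<alpha> > -1"
    and "\<phi> holomorphic_on ball 0 1" and "\<phi> ` ball 0 1 \<subseteq> ball 0 1" and "\<phi> 0 = 0"
    and "\<psi> holomorphic_on ball 0 1"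
    and "m > 0" and "\<forall>k<m. (deriv ^^ k) \<psi> 0 = 0" and "(deriv ^^ m) \<psi> 0 \<noteq> 0"
    and "bounded_on_bergman \<alpha> (wcomp \<psi> \<phi>)"
  shows "cball 0 (fact m * Gamma (\<alpha> + 2) / (Gamma (real m + \<alpha> + 2) + fact m * Gamma (\<alpha> + 2))
            * cmod ((deriv ^^ m) \<psi> 0 / fact m))
         \<subseteq> numerical_range \<alpha> (wcomp \<psi> \<phi>)"
proof (rule subsetI)
  note a = assms(1) and phih = assms(2) and phimap = assms(3) and phi0 = assms(4)
    and psih = assms(5) and m0 = assms(6) and psiz = assms(7) and psim = assms(8) and bdd = assms(9)
  fix l :: complex assume l: "l \<in> cball 0 (fact m * Gamma (\<alpha> + 2) / (Gamma (real m + \<alpha> + 2) + fact m * Gamma (\<alpha> + 2))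
            * cmod ((deriv ^^ m) \<psi> 0 / fact m))"
  define A where "A = (deriv ^^ m) \<psi> 0 / fact m"
  define w where "w = wk \<alpha> m"
  have w0: "w > 0" unfolding w_def by (rule wk_pos[OF a])
  have A0: "A \<noteq> 0" unfolding A_def using psim by simp
  have lL: "cmod l \<le> w / (1 + w) * cmod A"
    using l unfolding radius_eq[OF a] A_def w_def by (simp add: dist_norm)
  obtain s where s0: "s > 0" and s1: "s + (cmod l)\<^sup>2 / ((cmod A)\<^sup>2 * w * s) = 1"
    using scalar_choice[OF w0 _ _ lL] A0 by auto
  define a where "a = sqrt s"
  have a0: "a > 0" unfolding a_def using s0 by simp
  have as: "a\<^sup>2 = s" unfolding a_def using s0 by simp
  define c2 where "c2 = cnj l / (cnj A * of_real w * of_real a)"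
  define f where "f = (\<lambda>z. of_real a + c2 * z ^ m)"
  interpret dA: finite_measure "dA_alpha \<alpha>" by (rule fin_dA[OF a])
  have psic: "continuous_on (ball 0 1) \<psi>" using psih by (rule holomorphic_on_imp_continuous_on)
  have phic: "continuous_on (ball 0 1) \<phi>" using phih by (rule holomorphic_on_imp_continuous_on)
  have pphih: "(\<lambda>z. \<psi> z * \<phi> z ^ m) holomorphic_on ball 0 1"
    by (intro holomorphic_intros psih phih)
  have pphic: "continuous_on (ball 0 1) (\<lambda>z. \<psi> z * \<phi> z ^ m)"
    using pphih by (rule holomorphic_on_imp_continuous_on)
  have bs: "\<And>g. g \<in> bergman_space \<alpha> \<Longrightarrow> wcomp \<psi> \<phi> g \<in> bergman_space \<alpha>"
    using bdd unfolding bounded_on_bergman_def by blast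
  have psi2: "integrable (dA_alpha \<alpha>) (\<lambda>z. (cmod (\<psi> z))\<^sup>2)"
    using bs[OF const_in_bergman[OF a, of 1]] unfolding bergman_space_def wcomp_def by simp
  have pphi2: "integrable (dA_alpha \<alpha>) (\<lambda>z. (cmod (\<psi> z * \<phi> z ^ m))\<^sup>2)"
    using bs[OF power_in_bergman[OF a, of m]] unfolding bergman_space_def wcomp_def by simp
  have ipsi: "integrable (dA_alpha \<alpha>) (\<lambda>z. \<psi> z * cnj (z ^ k))" for k
    by (rule int_mult_bdd[OF a psic psi2]) (auto intro!: continuous_intros power_le_one simp: norm_power)
  have ipphi: "integrable (dA_alpha \<alpha>) (\<lambda>z. \<psi> z * \<phi> z ^ m * cnj (z ^ k))" for k
    by (rule int_mult_bdd[OF a pphic pphi2]) (auto intro!: continuous_intros power_le_one simp: norm_power)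
  have I1: "(\<integral>z. \<psi> z * cnj (z ^ 0) \<partial>dA_alpha \<alpha>) = 0"
  proof -
    have "\<psi> 0 = 0" using spec[OF psiz, of 0] m0 by simp
    thus ?thesis using coeff_integral[OF a psih ipsi[of 0]] by simp
  qed
  have I2: "(\<integral>z. \<psi> z * cnj (z ^ m) \<partial>dA_alpha \<alpha>) = A * w"
    using coeff_integral[OF a psih ipsi[of m]] unfolding A_def w_def by simp
  have I3: "(\<integral>z. \<psi> z * \<phi> z ^ m * cnj (z ^ 0) \<partial>dA_alpha \<alpha>) = 0"
    using coeff_integral[OF a pphih ipphi[of 0]] phi0 m0 by simp
  have D4: "(deriv ^^ m) (\<lambda>z. \<psi> z * \<phi> z ^ m) 0 = 0"
  proof -
    have "(deriv ^^ m) (\<lambda>z. \<psi> z * \<phi> z ^ m) 0 =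
        (\<Sum>i = 0..m. of_nat (m choose i) * (deriv ^^ i) \<psi> 0 * (deriv ^^ (m - i)) (\<lambda>z. \<phi> z ^ m) 0)"
      by (rule higher_deriv_mult[OF psih _ open_ball]) (auto intro!: holomorphic_intros phih)
    also have "\<dots> = 0"
    proof (rule sum.neutral, rule ballI)
      fix i assume i: "i \<in> {0..m}"
      show "of_nat (m choose i) * (deriv ^^ i) \<psi> 0 * (deriv ^^ (m - i)) (\<lambda>z. \<phi> z ^ m) 0 = 0"
      proof (cases "i < m")
        case True thus ?thesis using psiz by simp
      next
        case False
        hence "m - i = 0" using i by simp
        thus ?thesis using phi0 m0 by simp
      qed
    qed
    finally show ?thesis .
  qed
  have I4: "(\<integral>z. \<psi> z * \<phi> z ^ m * cnj (z ^ m) \<partial>dA_alpha \<alpha>) = 0"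
    using coeff_integral[OF a pphih ipphi[of m]] D4 by simp
  have inner: "bergman_inner \<alpha> (wcomp \<psi> \<phi> f) f = l"
  proof -
    have eq: "wcomp \<psi> \<phi> f z * cnj (f z) =
        (of_real a * of_real a) * (\<psi> z * cnj (z ^ 0)) + (of_real a * cnj c2) * (\<psi> z * cnj (z ^ m))
        + (c2 * of_real a) * (\<psi> z * \<phi> z ^ m * cnj (z ^ 0)) + (c2 * cnj c2) * (\<psi> z * \<phi> z ^ m * cnj (z ^ m))" for z
      unfolding wcomp_def f_def by (simp add: algebra_simps)
    have hb: "has_bochner_integral (dA_alpha \<alpha>) (\<lambda>z. wcomp \<psi> \<phi> f z * cnj (f z))
        ((of_real a * of_real a) * 0 + (of_real a * cnj c2) * (A * w) + (c2 * of_real a) * 0 + (c2 * cnj c2) * 0)"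
    proof -
      have h1: "has_bochner_integral (dA_alpha \<alpha>) (\<lambda>z. \<psi> z * cnj (z ^ 0)) 0"
        using has_bochner_integral_integrable[OF ipsi[of 0]] I1 by simp
      have h2: "has_bochner_integral (dA_alpha \<alpha>) (\<lambda>z. \<psi> z * cnj (z ^ m)) (A * w)"
        using has_bochner_integral_integrable[OF ipsi[of m]] I2 by simp
      have h3: "has_bochner_integral (dA_alpha \<alpha>) (\<lambda>z. \<psi> z * \<phi> z ^ m * cnj (z ^ 0)) 0"
        using has_bochner_integral_integrable[OF ipphi[of 0]] I3 by simp
      have h4: "has_bochner_integral (dA_alpha \<alpha>) (\<lambda>z. \<psi> z * \<phi> z ^ m * cnj (z ^ m)) 0"
        using has_bochner_integral_integrable[OF ipphi[of m]] I4 by simp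
      show ?thesis unfolding eq by (rule four_terms[OF h1 h2 h3 h4])
    qed
    have "bergman_inner \<alpha> (wcomp \<psi> \<phi> f) f = of_real a * cnj c2 * (A * w)"
      unfolding bergman_inner_def using has_bochner_integral_integral_eq[OF hb] by simp
    also have "\<dots> = l"
      unfolding c2_def using a0 w0 A0 by (simp add: field_simps)
    finally show ?thesis .
  qed
  have fb: "f \<in> bergman_space \<alpha>"
  proof -
    have "f holomorphic_on ball 0 1" unfolding f_def by (intro holomorphic_intros)
    moreover have "integrable (dA_alpha \<alpha>) (\<lambda>z. (cmod (f z))\<^sup>2)"
    proof (rule Bochner_Integration.integrable_bound[OF _ _ AE_I2])
      show "integrable (dA_alpha \<alpha>) (\<lambda>z. (a + cmod c2)\<^sup>2)" by simp
      show "(\<lambda>z. (cmod (f z))\<^sup>2) \<in> borel_measurable (dA_alpha \<alpha>)"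
        unfolding f_def by (intro meas_dA_cont continuous_intros)
      fix z assume z: "z \<in> space (dA_alpha \<alpha>)"
      have "cmod (f z) \<le> a + cmod c2 * cmod z ^ m"
        unfolding f_def using norm_triangle_ineq[of "of_real a" "c2 * z ^ m"] a0
        by (simp add: norm_mult norm_power)
      also have "\<dots> \<le> a + cmod c2"
        using z by (auto intro!: mult_left_le power_le_one)
      finally have "cmod (f z) \<le> a + cmod c2" .
      hence "(cmod (f z))\<^sup>2 \<le> (a + cmod c2)\<^sup>2" by (intro power_mono) auto
      thus "norm ((cmod (f z))\<^sup>2) \<le> norm ((a + cmod c2)\<^sup>2)" by simp
    qed
    ultimately show ?thesis unfolding bergman_space_def by simp
  qed
  have meas1: "measure (dA_alpha \<alpha>) (space (dA_alpha \<alpha>)) = 1"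
    using emeasure_dA_space[OF a] by (simp add: measure_def)
  have J0: "has_bochner_integral (dA_alpha \<alpha>) (\<lambda>z. 1 :: complex) 1"
  proof -
    have "integrable (dA_alpha \<alpha>) (\<lambda>z. 1 :: complex)" by simp
    from has_bochner_integral_integrable[OF this] show ?thesis using meas1 by simp
  qed
  have izm: "integrable (dA_alpha \<alpha>) (\<lambda>z. z ^ m * cnj (z ^ 0))"
    by (rule int_mult_bdd[OF a _ _ _ cnj_pow_bdd])
       (use power_in_bergman[OF a, of m] in \<open>auto simp: bergman_space_def intro!: continuous_intros\<close>)
  have J1: "(\<integral>z. z ^ m * cnj (z ^ 0) \<partial>dA_alpha \<alpha>) = 0"
    using coeff_integral[OF a _ izm] m0 by (simp add: holomorphic_intros)
  have J1': "has_bochner_integral (dA_alpha \<alpha>) (\<lambda>z. z ^ m) 0"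
    using has_bochner_integral_integrable[OF izm] J1 by simp
  have J2: "has_bochner_integral (dA_alpha \<alpha>) (\<lambda>z. cnj (z ^ m)) 0"
    using has_bochner_integral_cnj[OF J1'] by simp
  have J3: "has_bochner_integral (dA_alpha \<alpha>) (\<lambda>z. z ^ m * cnj (z ^ m)) (of_real w)"
  proof -
    have e: "z ^ m * cnj (z ^ m) = of_real ((cmod z) ^ (2 * m))" for z
    proof -
      have "z ^ m * cnj (z ^ m) = of_real ((cmod (z ^ m))\<^sup>2)"
        using complex_norm_square[of "z ^ m"] by simp
      also have "(cmod (z ^ m))\<^sup>2 = (cmod z) ^ (2 * m)"
        by (simp add: norm_power power_mult[symmetric] mult.commute)
      finally show ?thesis .
    qed
    have "has_bochner_integral (dA_alpha \<alpha>) (\<lambda>z. (cmod z) ^ (2 * m)) w"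
      using has_bochner_integral_integrable[OF moment_integral(1)[OF a, of m]] moment_integral(2)[OF a, of m]
      unfolding w_def by simp
    hence "has_bochner_integral (dA_alpha \<alpha>) (\<lambda>z. of_real ((cmod z) ^ (2 * m)) :: complex) (of_real w)"
      by (rule has_bochner_integral_of_real)
    thus ?thesis unfolding e .
  qed
  have nf: "(\<integral>z. (cmod (f z))\<^sup>2 \<partial>dA_alpha \<alpha>) = 1"
  proof -
    have eq: "of_real ((cmod (f z))\<^sup>2) =
        (of_real a * of_real a) * 1 + (of_real a * cnj c2) * cnj (z ^ m)
        + (c2 * of_real a) * z ^ m + (c2 * cnj c2) * (z ^ m * cnj (z ^ m))" for z
      unfolding complex_norm_square f_def by (simp add: algebra_simps)
    have hb: "has_bochner_integral (dA_alpha \<alpha>) (\<lambda>z. of_real ((cmod (f z))\<^sup>2) :: complex)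
        ((of_real a * of_real a) * 1 + (of_real a * cnj c2) * 0 + (c2 * of_real a) * 0 + (c2 * cnj c2) * of_real w)"
      unfolding eq by (rule four_terms[OF J0 J2 J1' J3])
    have e1: "(\<integral>z. complex_of_real ((cmod (f z))\<^sup>2) \<partial>dA_alpha \<alpha>) = 
        (of_real a * of_real a) * 1 + (of_real a * cnj c2) * 0 + (c2 * of_real a) * 0 + (c2 * cnj c2) * of_real w"
      by (rule has_bochner_integral_integral_eq[OF hb])
    have e2: "(\<integral>z. complex_of_real ((cmod (f z))\<^sup>2) \<partial>dA_alpha \<alpha>) = complex_of_real (\<integral>z. (cmod (f z))\<^sup>2 \<partial>dA_alpha \<alpha>)"
      by (rule integral_complex_of_real)
    have "complex_of_real (\<integral>z. (cmod (f z))\<^sup>2 \<partial>dA_alpha \<alpha>) = of_real a * of_real a + c2 * cnj c2 * of_real w"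
      using e1 e2 by simp
    also have "c2 * cnj c2 = of_real ((cmod c2)\<^sup>2)" by (rule complex_norm_square[symmetric])
    also have "cmod c2 = cmod l / (cmod A * w * a)"
      unfolding c2_def using a0 w0 by (simp add: norm_divide norm_mult)
    finally have "complex_of_real (\<integral>z. (cmod (f z))\<^sup>2 \<partial>dA_alpha \<alpha>) = of_real (a * a + (cmod l / (cmod A * w * a))\<^sup>2 * w)"
      by simp
    hence "(\<integral>z. (cmod (f z))\<^sup>2 \<partial>dA_alpha \<alpha>) = a * a + (cmod l / (cmod A * w * a))\<^sup>2 * w"
      using of_real_eq_iff by blast
    also have "\<dots> = s + (cmod l)\<^sup>2 / ((cmod A)\<^sup>2 * w * s)"
      unfolding as[symmetric] using a0 w0 A0 by (simp add: field_simps power2_eq_square)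
    also have "\<dots> = 1" by (rule s1)
    finally show ?thesis .
  qed
  have "bergman_norm \<alpha> f = 1" unfolding bergman_norm_def nf by simp
  with fb inner show "l \<in> numerical_range \<alpha> (wcomp \<psi> \<phi>)"
    unfolding numerical_range_def by blast
qed

end
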